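(* Let $\mathbf{F}$ be a Baire foliage tree on a topological space $X$, let $p\in X$ and $v\in\mathrm{scope}_{\mathbf{F}}(p)$. Then there is a foliage tree $\mathbf{G}$ such that: (d1) $0_{\mathbf{G}}=v$ and $\max\mathbf{G}=\mathrm{sons}_{\mathbf{G}}(0_{\mathbf{G}})$; (d2) $\mathbf{G}_v=\mathbf{F}_v\setminus\{p\}$, and $\mathbf{G}_v$ is the union of the pairwise disjoint sets $\mathbf{F}_m$, $m\in\max\mathbf{G}$; (d3) $\mathbf{G}$ is a foliage graft for $\mathbf{F}$; (d4) $\mathrm{impl}\,\mathbf{G}=\varnothing$; (d5) $\mathbf{G}$ is $\omega$-branching, locally strict, open in $X$, has bounded chains, and has height $2$.
   Context: $\omega=\{0,1,2,\dots\}$, ${}^{<\omega}\omega$ is the set of finite sequences of natural numbers. A tree is a strict partial order in which the set of predecessors of every node is well-ordered; $\mathrm{height}(x)$ is the ordinal isomorphic to the set of predecessors of $x$; the height of a tree is the least ordinal $\beta$ such that no node has height $\beta$; a branch is a maximal chain; $\mathrm{sons}(x)$ is the set of immediate successors of $x$; $\max$ is the set of maximal nodes; $0$ denotes the least node. A tree is $\omega$-branching if every non-maximal node has exactly $\omega$ many sons; it has bounded chains if every nonempty chain $C$ has a node $v$ with $c\leq v$ for all $c\in C$. A foliage tree is a pair $\mathbf{F}=(T,l)$ with $T$ a tree (skeleton) and $l$ a function on its nodes, $\mathbf{F}_x:=l(x)$; tree notions apply via the skeleton; $\mathrm{scope}_{\mathbf{F}}(p)=\{x:p\in\mathbf{F}_x\}$.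 $\mathbf{F}$ is nonincreasing if $y\geq x$ implies $\mathbf{F}_y\subseteq\mathbf{F}_x$. $\mathbf{F}$ is locally strict if each non-maximal leaf $\mathbf{F}_x$ is the disjoint union of $\mathbf{F}_s$, $s\in\mathrm{sons}(x)$; has strict branches if it has a node and for each branch $B$, $\bigcap_{x\in B}\mathbf{F}_x$ is a singleton; is open in $X$ if all leaves are open in $X$; is a foliage $\omega,\omega$-tree if its skeleton is order-isomorphic to $({}^{<\omega}\omega,\subsetneq)$. A Baire foliage tree on $X$ is an open in $X$, locally strict foliage $\omega,\omega$-tree with strict branches and $\mathbf{F}_{0_{\mathbf{F}}}=X$. A tree $\mathcal{G}$ is a graft for a tree $\mathcal{T}$ if $\mathcal{G}$ has more than one node, has a least node $0_{\mathcal{G}}$, the common nodes of $\mathcal{G}$ and $\mathcal{T}$ are exactly $\{0_{\mathcal{G}}\}\cup\max\mathcal{G}$, and for common nodes $x,y$: $x<_{\mathcal{G}}y$ iff $x<_{\mathcal{T}}y$. $\mathrm{impl}\,\mathcal{G}$ is the set of nodes of $\mathcal{G}$ other than $0_{\mathcal{G}}$ and the maximal ones. For a nonincreasing foliage tree $\mathbf{F}$, a foliage graft for $\mathbf{F}$ is a nonincreasing foliage tree $\mathbf{G}$ whose skeleton is a graft for the skeleton of $\mathbf{F}$, with $\mathbf{G}_{0_{\mathbf{G}}}\subseteq\mathbf{F}_{0_{\mathbf{G}}}$ and $\mathbf{G}_m=\mathbf{F}_m$ for all $m\in\max\mathbf{G}$. *)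

theory Defs
  imports "HOL-Analysis.Analysis" "HOL-Library.Sublist"
begin

text \<open>A foliage tree: a skeleton (node set with strict order) and a leaf function.
  Node and point types are type variables; grafts live on the same node type as the tree.\<close>

record ('n, 'x) ftree =
  nodes :: "'n set"
  less  :: "'n \<Rightarrow> 'n \<Rightarrow> bool"
  leaf  :: "'n \<Rightarrow> 'x set"

definition preds :: "('n, 'x) ftree \<Rightarrow> 'n \<Rightarrow> 'n set" where
  "preds F x = {y \<in> nodes F. less F y x}"

definition leq :: "('n, 'x) ftree \<Rightarrow> 'n \<Rightarrow> 'n \<Rightarrow> bool" where
  "leq F x y \<longleftrightarrow> x = y \<or> less F x y"

definition is_tree :: "('n, 'x) ftree \<Rightarrow> bool" where
  "is_tree F \<longleftrightarrow>
     (\<forall>x\<in>nodes F. \<not> less F x x) \<and>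
     (\<forall>x\<in>nodes F. \<forall>y\<in>nodes F. \<forall>z\<in>nodes F. less F x y \<longrightarrow> less F y z \<longrightarrow> less F x z) \<and>
     (\<forall>x\<in>nodes F.
        (\<forall>y\<in>preds F x. \<forall>z\<in>preds F x. y = z \<or> less F y z \<or> less F z y) \<and>
        (\<forall>S. S \<subseteq> preds F x \<longrightarrow> S \<noteq> {} \<longrightarrow> (\<exists>m\<in>S. \<forall>s\<in>S. leq F m s)))"

definition node_height_is :: "('n, 'x) ftree \<Rightarrow> 'n \<Rightarrow> nat \<Rightarrow> bool" where
  "node_height_is F x k \<longleftrightarrow> finite (preds F x) \<and> card (preds F x) = k"

definition tree_height_is :: "('n, 'x) ftree \<Rightarrow> nat \<Rightarrow> bool" where
  "tree_height_is F n \<longleftrightarrow>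
     (\<forall>k<n. \<exists>x\<in>nodes F. node_height_is F x k) \<and> \<not> (\<exists>x\<in>nodes F. node_height_is F x n)"

definition chain :: "('n, 'x) ftree \<Rightarrow> 'n set \<Rightarrow> bool" where
  "chain F C \<longleftrightarrow> C \<subseteq> nodes F \<and> (\<forall>x\<in>C. \<forall>y\<in>C. x = y \<or> less F x y \<or> less F y x)"

definition branch :: "('n, 'x) ftree \<Rightarrow> 'n set \<Rightarrow> bool" where
  "branch F B \<longleftrightarrow> chain F B \<and> (\<forall>C. chain F C \<longrightarrow> B \<subseteq> C \<longrightarrow> C = B)"

definition sons :: "('n, 'x) ftree \<Rightarrow> 'n \<Rightarrow> 'n set" where
  "sons F x = {y \<in> nodes F. less F x y \<and> \<not> (\<exists>z\<in>nodes F. less F x z \<and> less F z y)}"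

definition maxs :: "('n, 'x) ftree \<Rightarrow> 'n set" where
  "maxs F = {x \<in> nodes F. \<not> (\<exists>y\<in>nodes F. less F x y)}"

definition is_root :: "('n, 'x) ftree \<Rightarrow> 'n \<Rightarrow> bool" where
  "is_root F r \<longleftrightarrow> r \<in> nodes F \<and> (\<forall>x\<in>nodes F. leq F r x)"

definition root :: "('n, 'x) ftree \<Rightarrow> 'n" where
  "root F = (THE r. is_root F r)"

definition omega_branching :: "('n, 'x) ftree \<Rightarrow> bool" where
  "omega_branching F \<longleftrightarrow>
     (\<forall>x \<in> nodes F - maxs F. infinite (sons F x) \<and> countable (sons F x))"

definition bounded_chains :: "('n, 'x) ftree \<Rightarrow> bool" where
  "bounded_chains F \<longleftrightarrow>
     (\<forall>C. chain F C \<longrightarrow> C \<noteq> {} \<longrightarrow> (\<exists>v\<in>nodes F. \<forall>c\<in>C. leq F c v))"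

definition scope :: "('n, 'x) ftree \<Rightarrow> 'x \<Rightarrow> 'n set" where
  "scope F p = {x \<in> nodes F. p \<in> leaf F x}"

definition nonincreasing :: "('n, 'x) ftree \<Rightarrow> bool" where
  "nonincreasing F \<longleftrightarrow>
     (\<forall>x\<in>nodes F. \<forall>y\<in>nodes F. leq F x y \<longrightarrow> leaf F y \<subseteq> leaf F x)"

definition locally_strict :: "('n, 'x) ftree \<Rightarrow> bool" where
  "locally_strict F \<longleftrightarrow>
     (\<forall>x \<in> nodes F - maxs F.
        leaf F x = (\<Union>s\<in>sons F x. leaf F s) \<and>
        (\<forall>s\<in>sons F x. \<forall>t\<in>sons F x. s \<noteq> t \<longrightarrow> leaf F s \<inter> leaf F t = {}))"

definition strict_branches :: "('n, 'x) ftree \<Rightarrow> bool" where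
  "strict_branches F \<longleftrightarrow> nodes F \<noteq> {} \<and>
     (\<forall>B. branch F B \<longrightarrow> (\<exists>q. (\<Inter>x\<in>B. leaf F x) = {q}))"

definition open_in_space :: "'x topology \<Rightarrow> ('n, 'x) ftree \<Rightarrow> bool" where
  "open_in_space X F \<longleftrightarrow> (\<forall>x\<in>nodes F. openin X (leaf F x))"

definition omega_omega :: "('n, 'x) ftree \<Rightarrow> bool" where
  "omega_omega F \<longleftrightarrow>
     (\<exists>f. bij_betw f (nodes F) (UNIV :: nat list set) \<and>
          (\<forall>x\<in>nodes F. \<forall>y\<in>nodes F. less F x y \<longleftrightarrow> strict_prefix (f x) (f y)))"

definition baire_ftree :: "'x topology \<Rightarrow> ('n, 'x) ftree \<Rightarrow> bool" where
  "baire_ftree X F \<longleftrightarrow> is_tree F \<and> open_in_space X F \<and> locally_strict F \<and> omega_omega F \<and>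
     strict_branches F \<and> leaf F (root F) = topspace X"

definition impl :: "('n, 'x) ftree \<Rightarrow> 'n set" where
  "impl G = nodes G - {root G} - maxs G"

definition is_graft :: "('n, 'x) ftree \<Rightarrow> ('n, 'y) ftree \<Rightarrow> bool" where
  "is_graft G T \<longleftrightarrow>
     is_tree G \<and> (\<exists>a\<in>nodes G. \<exists>b\<in>nodes G. a \<noteq> b) \<and> (\<exists>r. is_root G r) \<and>
     nodes G \<inter> nodes T = {root G} \<union> maxs G \<and>
     (\<forall>x \<in> nodes G \<inter> nodes T. \<forall>y \<in> nodes G \<inter> nodes T. less G x y \<longleftrightarrow> less T x y)"

definition foliage_graft :: "('n, 'x) ftree \<Rightarrow> ('n, 'x) ftree \<Rightarrow> bool" where
  "foliage_graft G F \<longleftrightarrow>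
     is_tree G \<and> nonincreasing G \<and> is_graft G F \<and>
     leaf G (root G) \<subseteq> leaf F (root G) \<and>
     (\<forall>m\<in>maxs G. leaf G m = leaf F m)"

end

theory Submission
  imports Defs
begin

lemma son_list:
  "(strict_prefix w u \<and> \<not> (\<exists>u'. strict_prefix w u' \<and> strict_prefix u' u)) \<longleftrightarrow> (\<exists>c. u = w @ [c])"
proof
  assume A: "strict_prefix w u \<and> \<not> (\<exists>u'. strict_prefix w u' \<and> strict_prefix u' u)"
  then obtain d r where u: "u = w @ d # r" by (meson strict_prefixE')
  have "r = []"
  proof (rule ccontr)
    assume "r \<noteq> []"
    hence "strict_prefix w (w @ [d]) \<and> strict_prefix (w @ [d]) u"
      using u by (auto simp: strict_prefix_def prefix_def)
    thus False using A by blast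
  qed
  thus "\<exists>c. u = w @ [c]" using u by auto
next
  assume "\<exists>c. u = w @ [c]"
  then obtain c where u: "u = w @ [c]" by blast
  have "\<not> (strict_prefix w u' \<and> strict_prefix u' u)" for u'
  proof
    assume "strict_prefix w u' \<and> strict_prefix u' u"
    hence "length w < length u'" "length u' < length u" using prefix_length_less by blast+
    thus False using u by simp
  qed
  thus "strict_prefix w u \<and> \<not> (\<exists>u'. strict_prefix w u' \<and> strict_prefix u' u)"
    using u by (auto simp: strict_prefix_def)
qed

lemma strict_prefix_butlast: "strict_prefix z1 z2 \<Longrightarrow> prefix z1 (butlast z2)"
proof -
  assume "strict_prefix z1 z2"
  then obtain d r where "z2 = z1 @ d # r" by (meson strict_prefixE')
  thus ?thesis by (simp add: butlast_append)
qed

lemma baire_lists: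
  fixes F :: "('n, 'x) ftree"
  assumes "baire_ftree X F"
  obtains g :: "nat list \<Rightarrow> 'n" where "\<And>u. g u \<in> nodes F" "\<And>x. x \<in> nodes F \<Longrightarrow> \<exists>u. x = g u"
   "\<And>u w. g u = g w \<Longrightarrow> u = w"
   "\<And>u w. less F (g u) (g w) \<longleftrightarrow> strict_prefix u w"
   "\<And>w. leaf F (g w) = (\<Union>c. leaf F (g (w @ [c])))"
   "\<And>w c d. c \<noteq> d \<Longrightarrow> leaf F (g (w@[c])) \<inter> leaf F (g (w@[d])) = {}"
   "\<And>B. branch F B \<Longrightarrow> \<exists>q. (\<Inter>x\<in>B. leaf F x) = {q}"
proof -
  from assms have ls: "locally_strict F" and oo: "omega_omega F" and sb: "strict_branches F"
    unfolding baire_ftree_def by auto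
  from oo obtain f where bij: "bij_betw f (nodes F) (UNIV :: nat list set)"
    and iso: "\<forall>x\<in>nodes F. \<forall>y\<in>nodes F. less F x y \<longleftrightarrow> strict_prefix (f x) (f y)"
    unfolding omega_omega_def by blast
  define g where "g = inv_into (nodes F) f"
  have gin: "g u \<in> nodes F" for u
    unfolding g_def by (metis bij bij_betw_imp_surj_on inv_into_into UNIV_I)
  have fg: "f (g u) = u" for u
    unfolding g_def by (meson bij bij_betw_inv_into_right UNIV_I)
  have gf: "x \<in> nodes F \<Longrightarrow> x = g (f x)" for x
    unfolding g_def by (metis bij bij_betw_inv_into_left)
  have ginj: "g u = g w \<Longrightarrow> u = w" for u w by (metis fg)
  have gless: "less F (g u) (g w) \<longleftrightarrow> strict_prefix u w" for u w
    using iso gin fg by metis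
  have sons: "sons F (g w) = range (\<lambda>c. g (w @ [c]))" for w
  proof
    show "sons F (g w) \<subseteq> range (\<lambda>c. g (w @ [c]))"
    proof
      fix y assume y: "y \<in> sons F (g w)"
      then have yn: "y \<in> nodes F" unfolding sons_def by auto
      obtain u where yu: "y = g u" using gf[OF yn] by blast
      have "strict_prefix w u \<and> \<not> (\<exists>u'. strict_prefix w u' \<and> strict_prefix u' u)"
      proof -
        have a: "less F (g w) (g u)" and b: "\<forall>z\<in>nodes F. \<not> (less F (g w) z \<and> less F z (g u))"
          using y unfolding sons_def yu by auto
        have "\<not> (strict_prefix w u' \<and> strict_prefix u' u)" for u'
          using b gin[of u'] gless by blast
        thus ?thesis using a gless by blast
      qed
      then obtain c where "u = w @ [c]" using son_list by blast
      thus "y \<in> range (\<lambda>c. g (w @ [c]))" using yu by blast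
    qed
  next
    show "range (\<lambda>c. g (w @ [c])) \<subseteq> sons F (g w)"
    proof
      fix y assume "y \<in> range (\<lambda>c. g (w @ [c]))"
      then obtain c where yc: "y = g (w @ [c])" by blast
      have sp: "strict_prefix w (w @ [c]) \<and> \<not> (\<exists>u'. strict_prefix w u' \<and> strict_prefix u' (w @ [c]))"
        using son_list by blast
      have "\<not> (\<exists>z\<in>nodes F. less F (g w) z \<and> less F z y)"
      proof
        assume "\<exists>z\<in>nodes F. less F (g w) z \<and> less F z y"
        then obtain z where "z \<in> nodes F" "less F (g w) z" "less F z y" by blast
        moreover obtain u' where "z = g u'" using gf calculation(1) by blast
        ultimately show False using sp yc gless by auto
      qed
      thus "y \<in> sons F (g w)" unfolding sons_def using yc gin gless sp by auto
    qed
  qed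
  have nm: "g w \<in> nodes F - maxs F" for w
  proof -
    have "less F (g w) (g (w @ [0]))" using gless by (simp add: strict_prefix_def)
    thus ?thesis using gin unfolding maxs_def by blast
  qed
  have L1: "leaf F (g w) = (\<Union>c. leaf F (g (w @ [c])))" for w
  proof -
    have "leaf F (g w) = (\<Union>s\<in>sons F (g w). leaf F s)"
      using ls nm[of w] unfolding locally_strict_def by blast
    thus ?thesis unfolding sons by (simp add: image_image)
  qed
  have L2: "leaf F (g (w@[c])) \<inter> leaf F (g (w@[d])) = {}" if "c \<noteq> d" for w c d
  proof -
    have "g (w@[c]) \<noteq> g (w@[d])" using ginj that by blast
    moreover have "\<forall>s\<in>sons F (g w). \<forall>t\<in>sons F (g w). s \<noteq> t \<longrightarrow> leaf F s \<inter> leaf F t = {}"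
      using ls nm[of w] unfolding locally_strict_def by blast
    ultimately show ?thesis unfolding sons by blast
  qed
  show ?thesis
    apply (rule that[of g])
    apply (rule gin)
    apply (metis gf)
    apply (erule ginj)
    apply (rule gless)
    apply (rule L1)
    apply (erule L2)
    using sb unfolding strict_branches_def by blast
qed

lemma NI:
  assumes L1: "\<And>w. Lf w = (\<Union>c. Lf (w @ [c]))"
  shows "prefix u w \<Longrightarrow> Lf w \<subseteq> Lf u"
proof (induction w rule: rev_induct)
  case Nil thus ?case by simp
next
  case (snoc x xs)
  have "Lf (xs @ [x]) \<subseteq> Lf xs" using L1[of xs] by blast
  thus ?case using snoc by auto
qed

lemma DIV:
  assumes L1: "\<And>w. Lf w = (\<Union>c. Lf (w @ [c]))"
    and L2: "\<And>w c d. c \<noteq> d \<Longrightarrow> Lf (w@[c]) \<inter> Lf (w@[d]) = {}"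
    and "\<not> prefix u w" "\<not> prefix w u"
  shows "Lf u \<inter> Lf w = {}"
proof -
  have "u \<parallel> w" using assms(3,4) by blast
  then obtain as b bs c cs where bc: "b \<noteq> c" "u = as @ b # bs" "w = as @ c # cs"
    using parallel_decomp by blast
  have "Lf u \<subseteq> Lf (as @ [b])" "Lf w \<subseteq> Lf (as @ [c])"
    using NI[OF L1] bc by (auto simp: prefix_def)
  thus ?thesis using L2[OF bc(1), of as] by blast
qed

lemma exlen:
  assumes L1: "\<And>w. Lf w = (\<Union>c. Lf (w @ [c]))" and "p \<in> Lf a"
  shows "\<exists>w. length w = n \<and> p \<in> Lf w"
proof (induction n)
  case 0
  have "Lf a \<subseteq> Lf []" using NI[OF L1] by simp
  thus ?case using assms(2) by auto
next
  case (Suc n)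
  then obtain w where "length w = n" "p \<in> Lf w" by blast
  then obtain c where "p \<in> Lf (w @ [c])" using L1[of w] by blast
  thus ?case using \<open>length w = n\<close> by (intro exI[of _ "w @ [c]"]) auto
qed

lemma cover:
  assumes L1: "\<And>w. Lf w = (\<Union>c. Lf (w @ [c]))"
    and L2: "\<And>w c d. c \<noteq> d \<Longrightarrow> Lf (w@[c]) \<inter> Lf (w@[d]) = {}"
    and q: "q \<in> Lf a"
  shows "p \<in> Lf (a @ r) \<Longrightarrow> q \<notin> Lf (a @ r) \<Longrightarrow>
    \<exists>z. strict_prefix a z \<and> p \<notin> Lf z \<and> p \<in> Lf (butlast z) \<and> q \<in> Lf z"
proof (induction r rule: rev_induct)
  case Nil thus ?case using q by simp
next
  case (snoc c r)
  have pr: "p \<in> Lf (a @ r)" using snoc.prems(1) NI[OF L1, of "a @ r" "a @ r @ [c]"] by auto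
  show ?case
  proof (cases "q \<in> Lf (a @ r)")
    case False thus ?thesis using snoc.IH pr by blast
  next
    case True
    then obtain d where d: "q \<in> Lf (a @ r @ [d])" using L1[of "a @ r"] by auto
    have "d \<noteq> c" using d snoc.prems(2) by auto
    hence "p \<notin> Lf (a @ r @ [d])" using L2[of d c "a @ r"] snoc.prems(1) by auto
    moreover have "strict_prefix a (a @ r @ [d])" by (simp add: strict_prefix_def)
    ultimately show ?thesis using d pr by (intro exI[of _ "a @ r @ [d]"]) (simp add: butlast_append)
  qed
qed

theorem lemma18:
  fixes X :: "'x topology" and F :: "('n, 'x) ftree" and p :: 'x and v :: 'n
  assumes "baire_ftree X F"
    and "p \<in> topspace X"
    and "v \<in> scope F p"
  shows "\<exists>G :: ('n, 'x) ftree.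
     is_tree G \<and>
     (is_root G v \<and> maxs G = sons G (root G)) \<and>
     (leaf G v = leaf F v - {p} \<and>
      leaf G v = (\<Union>m\<in>maxs G. leaf F m) \<and>
      (\<forall>m\<in>maxs G. \<forall>m'\<in>maxs G. m \<noteq> m' \<longrightarrow> leaf F m \<inter> leaf F m' = {})) \<and>
     foliage_graft G F \<and>
     impl G = {} \<and>
     (omega_branching G \<and> locally_strict G \<and> open_in_space X G \<and>
      bounded_chains G \<and> tree_height_is G 2)"
proof -
  obtain g :: "nat list \<Rightarrow> 'n" where gin: "\<And>u. g u \<in> nodes F"
   and gsurj: "\<And>x. x \<in> nodes F \<Longrightarrow> \<exists>u. x = g u"
   and ginj: "\<And>u w. g u = g w \<Longrightarrow> u = w"
   and gless: "\<And>u w. less F (g u) (g w) \<longleftrightarrow> strict_prefix u w"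
   and L1g: "\<And>w. leaf F (g w) = (\<Union>c. leaf F (g (w @ [c])))"
   and L2g: "\<And>w c d. c \<noteq> d \<Longrightarrow> leaf F (g (w@[c])) \<inter> leaf F (g (w@[d])) = {}"
   and SB: "\<And>B. branch F B \<Longrightarrow> \<exists>q. (\<Inter>x\<in>B. leaf F x) = {q}"
    by (rule baire_lists[OF assms(1)]) blast
  define Lf where "Lf w = leaf F (g w)" for w
  have L1: "\<And>w. Lf w = (\<Union>c. Lf (w @ [c]))" unfolding Lf_def by (rule L1g)
  have L2: "\<And>w c d. c \<noteq> d \<Longrightarrow> Lf (w@[c]) \<inter> Lf (w@[d]) = {}" unfolding Lf_def by (rule L2g)
  have vn: "v \<in> nodes F" and pv: "p \<in> leaf F v" using assms(3) unfolding scope_def by auto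
  obtain a where va: "v = g a" using gsurj[OF vn] by blast
  have pa: "p \<in> Lf a" using pv va Lf_def by simp
  have opn: "openin X (leaf F x)" if "x \<in> nodes F" for x
    using assms(1) that unfolding baire_ftree_def open_in_space_def by blast
  define S where "S = {w. p \<in> Lf w}"
  have chS: "prefix u w \<or> prefix w u" if "u \<in> S" "w \<in> S" for u w
    using DIV[OF L1 L2, of u w] that unfolding S_def by blast
  have spl: "strict_prefix u w \<Longrightarrow> length u < length w" for u w :: "nat list"
    by (rule prefix_length_less)
  have brS: "branch F (g ` S)"
    unfolding branch_def
  proof (intro conjI allI impI)
    show chain: "chain F (g ` S)"
      unfolding chain_def
    proof (intro conjI ballI)
      show "g ` S \<subseteq> nodes F" using gin by blast
    next
      fix x y assume "x \<in> g ` S" "y \<in> g ` S"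
      then obtain u w where "x = g u" "y = g w" "u \<in> S" "w \<in> S" by blast
      thus "x = y \<or> less F x y \<or> less F y x"
        using chS[of u w] gless by (auto simp: strict_prefix_def)
    qed
  next
    fix C assume C: "chain F C" "g ` S \<subseteq> C"
    show "C = g ` S"
    proof
      show "C \<subseteq> g ` S"
      proof
        fix x assume xC: "x \<in> C"
        hence "x \<in> nodes F" using C unfolding chain_def by blast
        then obtain u where xu: "x = g u" using gsurj by blast
        obtain w where w: "length w = length u" "p \<in> Lf w" using exlen[OF L1 pa] by blast
        have "g w \<in> C" using C(2) w unfolding S_def by blast
        hence "x = g w \<or> less F x (g w) \<or> less F (g w) x" using C(1) xC unfolding chain_def by blast
        hence "u = w" using xu gless ginj spl w(1) by (metis less_irrefl)
        thus "x \<in> g ` S" using xu w unfolding S_def by blast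
      qed
    qed (rule C(2))
  qed
  obtain q where q: "(\<Inter>x\<in>g ` S. leaf F x) = {q}" using SB[OF brS] by blast
  have "p \<in> (\<Inter>x\<in>g ` S. leaf F x)" unfolding S_def Lf_def by auto
  hence qp: "q = p" using q by auto
  define L where "L = {z. strict_prefix a z \<and> p \<notin> Lf z \<and> p \<in> Lf (butlast z)}"
  have cov: "\<exists>z\<in>L. q' \<in> Lf z" if q': "q' \<in> Lf a" "q' \<noteq> p" for q'
  proof -
    have "q' \<notin> (\<Inter>x\<in>g ` S. leaf F x)" using q qp q' by blast
    then obtain u where u: "u \<in> S" "q' \<notin> Lf u" unfolding Lf_def by blast
    have aS: "a \<in> S" using pa S_def by simp
    have "\<not> prefix u a" using NI[OF L1, of u a] u q' by blast
    hence "prefix a u" using chS[OF u(1) aS] by blast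
    then obtain r where "u = a @ r" by (auto simp: prefix_def)
    thus ?thesis using cover[OF L1 L2 q'(1), of p r] u unfolding S_def L_def by auto
  qed
  have Lsub: "Lf z \<subseteq> Lf a - {p}" if "z \<in> L" for z
    using that NI[OF L1, of a z] unfolding L_def by (auto simp: strict_prefix_def)
  have Lpar: "\<not> prefix z1 z2" if "z1 \<in> L" "z2 \<in> L" "z1 \<noteq> z2" for z1 z2
  proof
    assume "prefix z1 z2"
    hence "prefix z1 (butlast z2)" using that strict_prefix_butlast by (auto simp: strict_prefix_def)
    hence "Lf (butlast z2) \<subseteq> Lf z1" using NI[OF L1] by blast
    thus False using that unfolding L_def by blast
  qed
  have Ldisj: "Lf z1 \<inter> Lf z2 = {}" if "z1 \<in> L" "z2 \<in> L" "z1 \<noteq> z2" for z1 z2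
    using DIV[OF L1 L2] Lpar that by metis
  have Lunion: "Lf a - {p} = (\<Union>z\<in>L. Lf z)" using Lsub cov by blast
  have Linf: "infinite L"
  proof -
    define Cs where "Cs = {c. p \<notin> Lf (a @ [c])}"
    have "finite (UNIV - Cs)"
    proof (cases "UNIV - Cs = {}")
      case False
      then obtain c0 where "c0 \<in> UNIV - Cs" by blast
      hence "UNIV - Cs \<subseteq> {c0}" using L2[of _ c0 a] unfolding Cs_def by blast
      thus ?thesis using finite_subset by blast
    qed (metis Diff_eq_empty_iff finite.emptyI)
    hence "infinite Cs" using infinite_UNIV_nat by (metis Diff_infinite_finite)
    moreover have "(\<lambda>c. a @ [c]) ` Cs \<subseteq> L"
      using pa unfolding L_def Cs_def by (auto simp: strict_prefix_def)
    moreover have "inj (\<lambda>c. a @ [c])" by (auto simp: inj_def)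
    ultimately show ?thesis by (metis finite_imageD finite_subset inj_on_subset subset_UNIV)
  qed
  define M where "M = g ` L"
  have Minf: "infinite M" using Linf ginj unfolding M_def by (metis finite_imageD inj_onI)
  have Mcount: "countable M" unfolding M_def by simp
  have vM: "v \<notin> M"
  proof
    assume "v \<in> M"
    then obtain z where "z \<in> L" "g z = g a" using va M_def by auto
    thus False using ginj unfolding L_def by blast
  qed
  have Mn: "M \<subseteq> nodes F" using gin M_def by blast
  have vlessM: "less F v m" if "m \<in> M" for m
    using that va gless unfolding M_def L_def by auto
  have notMv: "\<not> less F m v" if mM: "m \<in> M" for m
  proof
    assume "less F m v"
    moreover obtain z where "z \<in> L" "m = g z" using mM M_def by auto
    ultimately have "strict_prefix z a" "strict_prefix a z" using va gless L_def by auto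
    thus False by (meson prefix_order.less_asym)
  qed
  have MM: "\<not> less F m m'" if mM: "m \<in> M" "m' \<in> M" for m m'
  proof
    assume l: "less F m m'"
    obtain z z' where zz: "z \<in> L" "m = g z" "z' \<in> L" "m' = g z'" using mM M_def by auto
    hence "strict_prefix z z'" using l gless by auto
    thus False using Lpar[OF zz(1,3)] by (auto simp: strict_prefix_def)
  qed
  have Mdisj: "leaf F m \<inter> leaf F m' = {}" if "m \<in> M" "m' \<in> M" "m \<noteq> m'" for m m'
    using that Ldisj unfolding M_def Lf_def by auto
  have Munion: "leaf F v - {p} = (\<Union>m\<in>M. leaf F m)"
    using Lunion unfolding M_def Lf_def va by (simp add: image_image)
  have Msub: "leaf F m \<subseteq> leaf F v - {p}" if "m \<in> M" for m using that Munion by blast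
  obtain m0 where m0: "m0 \<in> M" using Minf by (metis ex_in_conv infinite_imp_nonempty)
  define G :: "('n, 'x) ftree" where "G = \<lparr>nodes = insert v M, less = (\<lambda>x y. x = v \<and> y \<in> M),
      leaf = (\<lambda>x. if x = v then leaf F v - {p} else leaf F x)\<rparr>"
  have Gn: "nodes G = insert v M" and Gl: "less G x y \<longleftrightarrow> x = v \<and> y \<in> M"
    and Gf: "leaf G x = (if x = v then leaf F v - {p} else leaf F x)" for x y
    unfolding G_def by simp_all
  have predsv: "preds G v = {}" using vM unfolding preds_def Gl by auto
  have predsm: "preds G m = {v}" if "m \<in> M" for m using that unfolding preds_def Gl Gn by auto
  have predsle: "preds G x \<subseteq> {v}" for x unfolding preds_def Gl by auto
  have tree: "is_tree G"
    unfolding is_tree_def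
  proof (intro conjI ballI allI impI)
    fix x assume "x \<in> nodes G" thus "\<not> less G x x" using vM Gl by auto
  next
    fix x y z assume "less G x y" "less G y z" thus "less G x z" using vM Gl by auto
  next
    fix x y z assume "y \<in> preds G x" "z \<in> preds G x"
    thus "y = z \<or> less G y z \<or> less G z y" using predsle by blast
  next
    fix x S assume "S \<subseteq> preds G x" "S \<noteq> {}"
    hence "S = {v}" using predsle by blast
    thus "\<exists>m\<in>S. \<forall>s\<in>S. leq G m s" unfolding leq_def by auto
  qed
  have isroot: "is_root G v" unfolding is_root_def leq_def Gn Gl by auto
  have rootG: "root G = v"
    unfolding root_def
  proof (rule the_equality[where P="is_root G", OF isroot])
    fix r assume "is_root G r"
    hence "leq G r v" "r \<in> nodes G" unfolding is_root_def using Gn by auto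
    thus "r = v" unfolding leq_def Gl using vM by auto
  qed
  have maxsG: "maxs G = M" unfolding maxs_def Gn Gl using m0 vM by auto
  have sonsG: "sons G v = M" unfolding sons_def Gn Gl using vM by auto
  have leafv: "leaf G v = leaf F v - {p}" using Gf by simp
  have leafm: "leaf G m = leaf F m" if "m \<in> M" for m using Gf vM that by auto
  have graft: "foliage_graft G F"
    unfolding foliage_graft_def
  proof (intro conjI)
    show "is_tree G" by (rule tree)
    show "nonincreasing G"
      unfolding nonincreasing_def leq_def Gl using Msub leafm leafv by auto
    show "is_graft G F"
      unfolding is_graft_def
    proof (intro conjI)
      show "is_tree G" by (rule tree)
      show "\<exists>a\<in>nodes G. \<exists>b\<in>nodes G. a \<noteq> b" using m0 vM Gn by auto
      show "\<exists>r. is_root G r" using isroot by blast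
      show "nodes G \<inter> nodes F = {root G} \<union> maxs G" using Gn rootG maxsG vn Mn by auto
      show "\<forall>x\<in>nodes G \<inter> nodes F. \<forall>y\<in>nodes G \<inter> nodes F. less G x y = less F x y"
        using Gn Gl vlessM notMv MM vM assms(1) unfolding baire_ftree_def is_tree_def
        by (metis Int_iff insert_iff vn)
    qed
    show "leaf G (root G) \<subseteq> leaf F (root G)" using rootG leafv by auto
    show "\<forall>m\<in>maxs G. leaf G m = leaf F m" using maxsG leafm by auto
  qed
  have implG: "impl G = {}" unfolding impl_def rootG maxsG Gn by auto
  have omb: "omega_branching G"
    unfolding omega_branching_def maxsG Gn using vM sonsG Minf Mcount by auto
  have lsG: "locally_strict G"
  proof -
    have e: "insert v M - M = {v}" using vM by auto
    have "leaf G v = (\<Union>s\<in>sons G v. leaf G s)" using sonsG leafm leafv Munion by simp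
    moreover have "\<forall>s\<in>sons G v. \<forall>t\<in>sons G v. s \<noteq> t \<longrightarrow> leaf G s \<inter> leaf G t = {}"
      using sonsG leafm Mdisj by simp
    ultimately show ?thesis unfolding locally_strict_def maxsG Gn e by simp
  qed
  have opG: "open_in_space X G"
    unfolding open_in_space_def Gn
  proof
    fix x assume "x \<in> insert v M"
    thus "openin X (leaf G x)"
    proof
      assume "x = v"
      thus ?thesis using leafv Munion opn Mn by (auto intro!: openin_Union)
    next
      assume "x \<in> M" thus ?thesis using leafm opn Mn by auto
    qed
  qed
  have bcG: "bounded_chains G"
    unfolding bounded_chains_def
  proof (intro allI impI)
    fix C assume C: "chain G C" "C \<noteq> {}"
    have CG: "C \<subseteq> insert v M" using C unfolding chain_def Gn by blast
    show "\<exists>w\<in>nodes G. \<forall>c\<in>C. leq G c w"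
    proof (cases "\<exists>m\<in>C. m \<in> M")
      case True
      then obtain m where m: "m \<in> C" "m \<in> M" by blast
      have "leq G c m" if "c \<in> C" for c
      proof -
        have "c = m \<or> less G c m \<or> less G m c" using C(1) m(1) that unfolding chain_def by blast
        thus ?thesis unfolding leq_def Gl using m vM by auto
      qed
      thus ?thesis using m Gn by auto
    next
      case False
      hence "C \<subseteq> {v}" using CG by blast
      thus ?thesis unfolding leq_def Gn by auto
    qed
  qed
  have htG: "tree_height_is G 2"
    unfolding tree_height_is_def node_height_is_def
  proof (intro conjI allI impI)
    fix k :: nat assume "k < 2"
    hence "k = 0 \<or> k = 1" by auto
    moreover have "finite (preds G v) \<and> card (preds G v) = 0" using predsv by simp
    moreover have "finite (preds G m0) \<and> card (preds G m0) = 1" using predsm[OF m0] by simp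
    ultimately show "\<exists>x\<in>nodes G. finite (preds G x) \<and> card (preds G x) = k"
      using m0 Gn by blast
  next
    show "\<not> (\<exists>x\<in>nodes G. finite (preds G x) \<and> card (preds G x) = 2)"
    proof
      assume "\<exists>x\<in>nodes G. finite (preds G x) \<and> card (preds G x) = 2"
      then obtain x where "card (preds G x) = 2" by blast
      moreover have "card (preds G x) \<le> card {v}" using predsle[of x] by (intro card_mono) auto
      ultimately show False by simp
    qed
  qed
  show ?thesis
    apply (rule exI[of _ G])
    using tree isroot rootG sonsG maxsG leafv Munion Mdisj graft implG omb lsG opG bcG htG
    by simp
qed

end
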